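(* Every monotone sequence $(a_i)_{i\in\mathbb N}$ in $\mathcal R$ has a supremum and an infimum in $\mathcal R$.
   Context: $\mathbb R^*$ is an ordered field containing $\mathbb R$ as an ordered subfield, equipped with a surjective ring homomorphism $J:\mathbb R^{\mathbb N}\to\mathbb R^*$ satisfying: if $a\in\mathbb R$ and there is $k\ge1$ with $\phi_{kn}\ge a$ for all $n\ge1$, then $J(\phi)\ge a$. A hyperreal $\xi$ is bounded if $|\xi|<k$ for some $k\in\mathbb N$. For nonzero $a,b\in\mathbb R^*$, $a\simeq b$ iff $a/b$ and $b/a$ are bounded; $[a]$ is the class of $a$; $\mathbb R^*/{\simeq}$ is ordered by $[a]\le[b]$ iff for all $x\in[a]$, $y\in[b]$, $x\simeq y$ or $x<y$. Let $\mathcal A$ be the set of monotone sequences in $\mathbb R^*/{\simeq}$; for $(a_i),(b_j)\in\mathcal A$, $(a_i)<(b_j)$ iff there is $M$ with $a_n<b_m$ for all $n,m>M$, and $(a_i)\approx(b_j)$ iff neither $(a_i)<(b_j)$ nor $(b_j)<(a_i)$. $\mathcal R=\mathcal A/{\approx}$ with the induced total order, and $\mathbb R^*/{\simeq}$ is identified with the classes of constant sequences. *)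

theory Defs
  imports Complex_Main
begin

definition hyper_structure :: "(real \<Rightarrow> 'a::linordered_field) \<Rightarrow> ((nat \<Rightarrow> real) \<Rightarrow> 'a) \<Rightarrow> bool" where
  "hyper_structure emb J \<longleftrightarrow>
     (\<forall>x y. emb (x + y) = emb x + emb y) \<and>
     (\<forall>x y. emb (x * y) = emb x * emb y) \<and>
     emb 1 = 1 \<and>
     (\<forall>x y. x \<le> y \<longleftrightarrow> emb x \<le> emb y) \<and>
     (\<forall>f g. J (\<lambda>n. f n + g n) = J f + J g) \<and>
     (\<forall>f g. J (\<lambda>n. f n * g n) = J f * J g) \<and>
     J (\<lambda>n. 1) = 1 \<and>
     surj J \<and>
     (\<forall>a \<phi>. (\<exists>k::nat. k \<ge> 1 \<and> (\<forall>n::nat. n \<ge> 1 \<longrightarrow> \<phi> (k * n) \<ge> a)) \<longrightarrow> J \<phi> \<ge> emb a)"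

definition hbounded :: "'a::linordered_field \<Rightarrow> bool" where
  "hbounded \<xi> \<longleftrightarrow> (\<exists>k::nat. \<bar>\<xi>\<bar> < of_nat k)"

definition hsim :: "'a::linordered_field \<Rightarrow> 'a \<Rightarrow> bool" where
  "hsim a b \<longleftrightarrow> a \<noteq> 0 \<and> b \<noteq> 0 \<and> hbounded (a / b) \<and> hbounded (b / a)"

definition hclass :: "'a::linordered_field \<Rightarrow> 'a set" where
  "hclass a = {b. hsim a b}"

definition hclasses :: "'a::linordered_field set set" where
  "hclasses = hclass ` {a. a \<noteq> 0}"

definition cls_le :: "'a::linordered_field set \<Rightarrow> 'a set \<Rightarrow> bool" where
  "cls_le A B \<longleftrightarrow> (\<forall>x\<in>A. \<forall>y\<in>B. hsim x y \<or> \<bar>x\<bar> < \<bar>y\<bar>)"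

definition cls_less :: "'a::linordered_field set \<Rightarrow> 'a set \<Rightarrow> bool" where
  "cls_less A B \<longleftrightarrow> cls_le A B \<and> A \<noteq> B"

definition seqA :: "(nat \<Rightarrow> 'a::linordered_field set) set" where
  "seqA = {s. (\<forall>i. s i \<in> hclasses) \<and>
              ((\<forall>i j. i \<le> j \<longrightarrow> cls_le (s i) (s j)) \<or> (\<forall>i j. i \<le> j \<longrightarrow> cls_le (s j) (s i)))}"

definition seq_less :: "(nat \<Rightarrow> 'a::linordered_field set) \<Rightarrow> (nat \<Rightarrow> 'a set) \<Rightarrow> bool" where
  "seq_less s t \<longleftrightarrow> (\<exists>M. \<forall>n m. n > M \<and> m > M \<longrightarrow> cls_less (s n) (t m))"

definition seq_equiv :: "(nat \<Rightarrow> 'a::linordered_field set) \<Rightarrow> (nat \<Rightarrow> 'a set) \<Rightarrow> bool" where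
  "seq_equiv s t \<longleftrightarrow> \<not> seq_less s t \<and> \<not> seq_less t s"

definition Rset :: "(nat \<Rightarrow> 'a::linordered_field set) set set" where
  "Rset = (\<lambda>s. {t \<in> seqA. seq_equiv s t}) ` seqA"

definition R_le :: "(nat \<Rightarrow> 'a::linordered_field set) set \<Rightarrow> (nat \<Rightarrow> 'a set) set \<Rightarrow> bool" where
  "R_le X Y \<longleftrightarrow> (\<forall>s\<in>X. \<forall>t\<in>Y. seq_less s t \<or> seq_equiv s t)"

definition R_mono_seq :: "(nat \<Rightarrow> (nat \<Rightarrow> 'a::linordered_field set) set) \<Rightarrow> bool" where
  "R_mono_seq Xs \<longleftrightarrow> (\<forall>k. Xs k \<in> Rset) \<and>
     ((\<forall>i j. i \<le> j \<longrightarrow> R_le (Xs i) (Xs j)) \<or> (\<forall>i j. i \<le> j \<longrightarrow> R_le (Xs j) (Xs i)))"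

definition R_is_sup :: "(nat \<Rightarrow> (nat \<Rightarrow> 'a::linordered_field set) set) \<Rightarrow> (nat \<Rightarrow> 'a set) set \<Rightarrow> bool" where
  "R_is_sup Xs S \<longleftrightarrow> S \<in> Rset \<and> (\<forall>k. R_le (Xs k) S) \<and>
     (\<forall>U\<in>Rset. (\<forall>k. R_le (Xs k) U) \<longrightarrow> R_le S U)"

definition R_is_inf :: "(nat \<Rightarrow> (nat \<Rightarrow> 'a::linordered_field set) set) \<Rightarrow> (nat \<Rightarrow> 'a set) set \<Rightarrow> bool" where
  "R_is_inf Xs I \<longleftrightarrow> I \<in> Rset \<and> (\<forall>k. R_le I (Xs k)) \<and>
     (\<forall>L\<in>Rset. (\<forall>k. R_le L (Xs k)) \<longrightarrow> R_le L I)"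

end

theory Submission
  imports Defs
begin

lemma abstract_sup:
  fixes lt :: "'b \<Rightarrow> 'b \<Rightarrow> bool" and S K :: "'b set" and r :: "nat \<Rightarrow> 'b"
  assumes irr: "\<And>s. s \<in> S \<Longrightarrow> \<not> lt s s"
  and tr: "\<And>s t u. s\<in>S \<Longrightarrow> t\<in>S \<Longrightarrow> u\<in>S \<Longrightarrow> lt s t \<Longrightarrow> lt t u \<Longrightarrow> lt s u"
  and nt: "\<And>s t u. s\<in>S \<Longrightarrow> t\<in>S \<Longrightarrow> u\<in>S \<Longrightarrow> lt s u \<Longrightarrow> lt s t \<or> lt t u"
  and KS: "K \<subseteq> S"
  and btw: "\<And>s t u. s\<in>S \<Longrightarrow> t\<in>S \<Longrightarrow> u\<in>S \<Longrightarrow> lt s t \<Longrightarrow> lt t u \<Longrightarrow> \<exists>c\<in>K. lt s c \<and> lt c u"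
  and lim: "\<And>c. (\<And>j. c j \<in> K) \<Longrightarrow> (\<And>j. lt (c j) (c (Suc j))) \<Longrightarrow>
              \<exists>\<sigma>\<in>S. (\<forall>k. \<not> lt \<sigma> (c k)) \<and> (\<forall>u\<in>S. lt u \<sigma> \<longrightarrow> (\<exists>k. lt u (c k)))"
  and rS: "\<And>k. r k \<in> S"
  and mono: "\<And>i j. i \<le> j \<Longrightarrow> \<not> lt (r j) (r i)"
  shows "\<exists>\<sigma>\<in>S. (\<forall>k. \<not> lt \<sigma> (r k)) \<and> (\<forall>u\<in>S. (\<forall>k. \<not> lt u (r k)) \<longrightarrow> \<not> lt u \<sigma>)"
proof (cases "\<exists>K. \<forall>k\<ge>K. \<not> lt (r K) (r k)")
  case True
  then obtain K where K: "\<And>k. k \<ge> K \<Longrightarrow> \<not> lt (r K) (r k)" by blast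
  show ?thesis
  proof (intro bexI[of _ "r K"] conjI allI ballI impI)
    fix k show "\<not> lt (r K) (r k)" using K mono by (cases "k \<ge> K") auto
  next
    fix u assume "u \<in> S" "\<forall>k. \<not> lt u (r k)" thus "\<not> lt u (r K)" by blast
  qed (rule rS)
next
  case False
  have ex: "\<exists>k. k > K \<and> lt (r K) (r k)" for K
  proof -
    from False obtain k where "k \<ge> K" "lt (r K) (r k)" by blast
    moreover have "k \<noteq> K" using irr rS \<open>lt (r K) (r k)\<close> by metis
    ultimately show ?thesis using le_neq_implies_less by blast
  qed
  define f where "f K = (SOME k. k > K \<and> lt (r K) (r k))" for K
  have f: "f K > K \<and> lt (r K) (r (f K))" for K using someI_ex[OF ex[of K]] unfolding f_def by blast
  define idx where "idx j = (f ^^ j) 0" for j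
  have idx_suc: "idx (Suc j) = f (idx j)" for j by (simp add: idx_def)
  have idx_ge: "idx j \<ge> j" for j
  proof (induction j)
    case 0 show ?case by simp
  next
    case (Suc j)
    have "f (idx j) > idx j" using f by blast
    thus ?case using Suc idx_suc by simp
  qed
  define R where "R j = r (idx j)" for j
  have RS: "R j \<in> S" for j using rS R_def by simp
  have Rlt: "lt (R j) (R (Suc j))" for j using f idx_suc R_def by simp
  have "\<forall>j. \<exists>c. c \<in> K \<and> lt (R (2*j)) c \<and> lt c (R (2*j+2))"
  proof
    fix j
    have "lt (R (2*j)) (R (2*j+1))" "lt (R (2*j+1)) (R (2*j+2))" using Rlt[of "2*j"] Rlt[of "2*j+1"] by auto
    thus "\<exists>c. c \<in> K \<and> lt (R (2*j)) c \<and> lt c (R (2*j+2))" using btw RS by blast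
  qed
  then obtain c where c: "\<And>j. c j \<in> K" "\<And>j. lt (R (2*j)) (c j)" "\<And>j. lt (c j) (R (2*j+2))"
    by metis
  have cS: "c j \<in> S" for j using c KS by blast
  have cinc: "lt (c j) (c (Suc j))" for j
  proof -
    have "lt (R (2*j+2)) (c (Suc j))" using c(2)[of "Suc j"] by simp
    thus ?thesis using tr[OF cS RS cS c(3)] by blast
  qed
  obtain \<sigma> where \<sigma>S: "\<sigma> \<in> S" and \<sigma>1: "\<forall>k. \<not> lt \<sigma> (c k)" and \<sigma>2: "\<forall>u\<in>S. lt u \<sigma> \<longrightarrow> (\<exists>k. lt u (c k))"
    using lim[of c, OF c(1) cinc] by blast
  show ?thesis
  proof (intro bexI[OF _ \<sigma>S] conjI allI ballI impI)
    fix k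
    have "idx (2*k) \<ge> k" using idx_ge[of "2*k"] by simp
    hence "\<not> lt (R (2*k)) (r k)" using mono R_def by simp
    hence "lt (r k) (c k)" using nt[OF RS rS cS c(2)] by blast
    thus "\<not> lt \<sigma> (r k)" using tr[OF \<sigma>S rS cS] \<sigma>1 by blast
  next
    fix u assume uS: "u \<in> S" and ub: "\<forall>k. \<not> lt u (r k)"
    show "\<not> lt u \<sigma>"
    proof
      assume "lt u \<sigma>"
      then obtain k where "lt u (c k)" using \<sigma>2 uS by blast
      hence "lt u (R (2*k+2))" using tr[OF uS cS RS] c(3) by blast
      thus False using ub R_def by simp
    qed
  qed
qed
lemma hb_mult: assumes "hbounded (a::'a::linordered_field)" "hbounded b" shows "hbounded (a*b)"
proof -
  from assms obtain k l :: nat where k: "\<bar>a\<bar> < of_nat k" and l: "\<bar>b\<bar> < of_nat l"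
    unfolding hbounded_def by blast
  have kp: "0 < (of_nat k::'a)" using k abs_ge_zero[of a] by linarith
  have "\<bar>a*b\<bar> = \<bar>a\<bar>*\<bar>b\<bar>" by (simp add: abs_mult)
  also have "\<dots> < of_nat k * of_nat l" using k l
    by (intro mult_strict_mono) (use kp in auto)
  finally show ?thesis unfolding hbounded_def by (metis of_nat_mult)
qed

lemma hb_le1: "\<bar>a::'a::linordered_field\<bar> \<le> 1 \<Longrightarrow> hbounded a"
  unfolding hbounded_def by (rule exI[of _ 2]) simp

lemma hb_div_le: "(y::'a::linordered_field) \<noteq> 0 \<Longrightarrow> \<bar>x\<bar> \<le> \<bar>y\<bar> \<Longrightarrow> hbounded (x/y)"
  by (rule hb_le1) (simp add: abs_divide divide_le_eq_1)

lemma hb_total: "(x::'a::linordered_field) \<noteq> 0 \<Longrightarrow> y \<noteq> 0 \<Longrightarrow> hbounded (x/y) \<or> hbounded (y/x)"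
  by (metis hb_div_le linear)

lemma hb_trans: assumes "(a::'a::linordered_field) \<noteq> 0" "b \<noteq> 0" "c \<noteq> 0" "hbounded (a/b)" "hbounded (b/c)"
  shows "hbounded (a/c)"
proof -
  have "a/c = (a/b)*(b/c)" using assms by (simp add: field_simps)
  thus ?thesis using hb_mult assms by metis
qed

lemma hb_one: "hbounded (1::'a::linordered_field)"
  by (rule hb_le1) simp

lemma hb_refl: "(a::'a::linordered_field) \<noteq> 0 \<Longrightarrow> hbounded (a/a)"
  by (simp add: hb_one[where ?'a='a])

lemma mem_hclass: "x \<in> hclass a \<longleftrightarrow> a \<noteq> 0 \<and> x \<noteq> 0 \<and> hbounded (a/x) \<and> hbounded (x/a)"
  unfolding hclass_def hsim_def by auto

lemma hclass_self: "(a::'a::linordered_field) \<noteq> 0 \<Longrightarrow> a \<in> hclass a"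
  by (simp add: mem_hclass hb_one)

lemma hclass_eq: assumes "(a::'a::linordered_field) \<noteq> 0" "b \<noteq> 0" "hbounded (a/b)" "hbounded (b/a)"
  shows "hclass a = hclass b"
  unfolding set_eq_iff mem_hclass using assms hb_trans by metis

lemma cls_le_iff: assumes "(a::'a::linordered_field) \<noteq> 0" "b \<noteq> 0"
  shows "cls_le (hclass a) (hclass b) \<longleftrightarrow> hbounded (a/b)"
proof
  assume "cls_le (hclass a) (hclass b)"
  hence "hsim a b \<or> \<bar>a\<bar> < \<bar>b\<bar>" unfolding cls_le_def using hclass_self assms by blast
  thus "hbounded (a/b)" using hb_div_le assms unfolding hsim_def by (metis less_imp_le)
next
  assume ab: "hbounded (a/b)"
  show "cls_le (hclass a) (hclass b)" unfolding cls_le_def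
  proof (intro ballI)
    fix x y assume x: "x \<in> hclass a" and y: "y \<in> hclass b"
    hence xy: "x \<noteq> 0" "y \<noteq> 0" by (auto simp: mem_hclass)
    have "hbounded (x/b)" using hb_trans[of x a b] x ab assms by (auto simp: mem_hclass)
    hence xyb: "hbounded (x/y)" using hb_trans[of x b y] y xy assms by (auto simp: mem_hclass)
    show "hsim x y \<or> \<bar>x\<bar> < \<bar>y\<bar>"
    proof (cases "hbounded (y/x)")
      case True thus ?thesis using xyb xy unfolding hsim_def by auto
    next
      case False
      hence "\<not> \<bar>y\<bar> \<le> \<bar>x\<bar>" using hb_div_le xy by metis
      thus ?thesis by simp
    qed
  qed
qed

lemma hclassesE: "A \<in> hclasses \<Longrightarrow> (\<And>a. a \<noteq> 0 \<Longrightarrow> A = hclass a \<Longrightarrow> P) \<Longrightarrow> P"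
  unfolding hclasses_def by blast

lemma cls_le_refl: "A \<in> hclasses \<Longrightarrow> cls_le A A"
  by (metis hclassesE cls_le_iff hb_refl)

lemma cls_le_trans: "A \<in> hclasses \<Longrightarrow> B \<in> hclasses \<Longrightarrow> C \<in> hclasses \<Longrightarrow> cls_le A B \<Longrightarrow> cls_le B C \<Longrightarrow> cls_le A C"
  by (metis hclassesE cls_le_iff hb_trans)

lemma cls_le_total: "A \<in> hclasses \<Longrightarrow> B \<in> hclasses \<Longrightarrow> cls_le A B \<or> cls_le B A"
  by (metis hclassesE cls_le_iff hb_total)

lemma cls_le_antisym: "A \<in> hclasses \<Longrightarrow> B \<in> hclasses \<Longrightarrow> cls_le A B \<Longrightarrow> cls_le B A \<Longrightarrow> A = B"
  by (metis hclassesE cls_le_iff hclass_eq)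

lemma cls_less_iff: "A \<in> hclasses \<Longrightarrow> B \<in> hclasses \<Longrightarrow> cls_less A B \<longleftrightarrow> \<not> cls_le B A"
  unfolding cls_less_def by (metis cls_le_refl cls_le_total cls_le_antisym)


lemma seqA_cls: "s \<in> seqA \<Longrightarrow> s n \<in> hclasses"
  unfolding seqA_def by blast

lemma seq_irrefl: "\<not> seq_less s s"
  unfolding seq_less_def cls_less_def by (metis less_add_one)

lemma seq_trans: assumes "s \<in> seqA" "t \<in> seqA" "u \<in> seqA" "seq_less s t" "seq_less t u"
  shows "seq_less s u"
proof -
  obtain M1 where M1: "\<And>n m. n > M1 \<Longrightarrow> m > M1 \<Longrightarrow> cls_less (s n) (t m)" using assms(4) unfolding seq_less_def by blast
  obtain M2 where M2: "\<And>n m. n > M2 \<Longrightarrow> m > M2 \<Longrightarrow> cls_less (t n) (u m)" using assms(5) unfolding seq_less_def by blast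
  show ?thesis unfolding seq_less_def
  proof (intro exI[of _ "max M1 M2"] allI impI)
    fix n m assume "max M1 M2 < n \<and> max M1 M2 < m"
    hence "cls_less (s n) (t (Suc (max M1 M2)))" "cls_less (t (Suc (max M1 M2))) (u m)" using M1 M2 by auto
    thus "cls_less (s n) (u m)" using assms(1-3) seqA_cls cls_less_iff cls_le_trans cls_le_total by metis
  qed
qed

lemma seq_nt: assumes s: "s \<in> seqA" and t: "t \<in> seqA" and u: "u \<in> seqA" and su: "seq_less s u"
  shows "seq_less s t \<or> seq_less t u"
proof (rule ccontr)
  assume "\<not> (seq_less s t \<or> seq_less t u)"
  hence nst: "\<And>M. \<exists>n m. n > M \<and> m > M \<and> cls_le (t m) (s n)"
    and ntu: "\<And>M. \<exists>n m. n > M \<and> m > M \<and> cls_le (u m) (t n)"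
    unfolding seq_less_def using s t u seqA_cls cls_less_iff by metis+
  obtain M0 where M0: "\<And>n m. n > M0 \<Longrightarrow> m > M0 \<Longrightarrow> cls_less (s n) (u m)" using su unfolding seq_less_def by blast
  have cl: "\<And>n. s n \<in> hclasses" "\<And>n. t n \<in> hclasses" "\<And>n. u n \<in> hclasses" using s t u seqA_cls by auto
  from t consider (inc) "\<forall>i j. i \<le> j \<longrightarrow> cls_le (t i) (t j)" | (dec) "\<forall>i j. i \<le> j \<longrightarrow> cls_le (t j) (t i)"
    unfolding seqA_def by blast
  thus False
  proof cases
    case inc
    obtain m1 k1 where a: "m1 > M0" "k1 > M0" "cls_le (u k1) (t m1)" using ntu by blast
    obtain n m2 where b: "n > m1" "m2 > m1" "cls_le (t m2) (s n)" using nst by blast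
    have "cls_le (t m1) (t m2)" using inc b by simp
    hence "cls_le (u k1) (s n)" using a b cl cls_le_trans by metis
    moreover have "cls_less (s n) (u k1)" using M0 a b by simp
    ultimately show False using cl cls_less_iff by metis
  next
    case dec
    obtain n1 m1 where a: "n1 > M0" "m1 > M0" "cls_le (t m1) (s n1)" using nst by blast
    obtain m2 k where b: "m2 > m1" "k > m1" "cls_le (u k) (t m2)" using ntu by blast
    have "cls_le (t m2) (t m1)" using dec b by simp
    hence "cls_le (u k) (s n1)" using a b cl cls_le_trans by metis
    moreover have "cls_less (s n1) (u k)" using M0 a b by simp
    ultimately show False using cl cls_less_iff by metis
  qed
qed

lemma const_seqA: "c \<in> hclasses \<Longrightarrow> (\<lambda>_. c) \<in> seqA"
  unfolding seqA_def using cls_le_refl by auto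

lemma seq_btw: assumes "s \<in> seqA" "t \<in> seqA" "u \<in> seqA" "seq_less s t" "seq_less t u"
  shows "\<exists>c\<in>{(\<lambda>_. d) | d. d \<in> hclasses}. seq_less s c \<and> seq_less c u"
proof -
  obtain M1 where M1: "\<And>n m. n > M1 \<Longrightarrow> m > M1 \<Longrightarrow> cls_less (s n) (t m)" using assms(4) unfolding seq_less_def by blast
  obtain M2 where M2: "\<And>n m. n > M2 \<Longrightarrow> m > M2 \<Longrightarrow> cls_less (t n) (u m)" using assms(5) unfolding seq_less_def by blast
  define d where "d = t (Suc (max M1 M2))"
  have "d \<in> hclasses" using d_def assms seqA_cls by blast
  moreover have "seq_less s (\<lambda>_. d)" unfolding seq_less_def d_def using M1 by (intro exI[of _ "max M1 M2"]) auto
  moreover have "seq_less (\<lambda>_. d) u" unfolding seq_less_def d_def using M2 by (intro exI[of _ "max M1 M2"]) auto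
  ultimately show ?thesis by blast
qed

lemma cls_chain: assumes "\<And>j. d j \<in> hclasses" "\<And>j. cls_le (d j) (d (Suc j))"
  shows "i \<le> j \<Longrightarrow> cls_le (d i) (d j)"
proof (induction j rule: dec_induct)
  case base show ?case using assms cls_le_refl by blast
next
  case (step j) thus ?case using assms cls_le_trans by blast
qed

lemma cls_chain': assumes "\<And>j. d j \<in> hclasses" "\<And>j. cls_le (d (Suc j)) (d j)"
  shows "i \<le> j \<Longrightarrow> cls_le (d j) (d i)"
proof (induction j rule: dec_induct)
  case base show ?case using assms cls_le_refl by blast
next
  case (step j) thus ?case using assms cls_le_trans by blast
qed

lemma seq_lim_inc: assumes c: "\<And>j. c j \<in> {(\<lambda>_. d) | d. d \<in> hclasses}" and inc: "\<And>j. seq_less (c j) (c (Suc j))"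
  shows "\<exists>\<sigma>\<in>seqA. (\<forall>k. \<not> seq_less \<sigma> (c k)) \<and> (\<forall>u\<in>seqA. seq_less u \<sigma> \<longrightarrow> (\<exists>k. seq_less u (c k)))"
proof -
  define d where "d j = c j 0" for j
  have cd: "c j = (\<lambda>_. d j)" for j using c[of j] d_def by auto
  have dh: "d j \<in> hclasses" for j using c[of j] d_def by auto
  have dl: "cls_less (d j) (d (Suc j))" for j using inc[of j] unfolding cd seq_less_def by auto
  have dle: "i \<le> j \<Longrightarrow> cls_le (d i) (d j)" for i j
    by (rule cls_chain[OF dh]) (use dl cls_less_def in auto)
  have dS: "d \<in> seqA" unfolding seqA_def using dh dle by blast
  show ?thesis
  proof (intro bexI[OF _ dS] conjI allI ballI impI)
    fix k show "\<not> seq_less d (c k)"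
    proof
      assume "seq_less d (c k)"
      then obtain M where "\<And>n. n > M \<Longrightarrow> cls_less (d n) (d k)" unfolding seq_less_def cd by blast
      hence "cls_less (d (max (Suc M) k)) (d k)" by simp
      thus False using dle[of k "max (Suc M) k"] dh cls_less_iff by auto
    qed
  next
    fix u assume "u \<in> seqA" "seq_less u d"
    then obtain M where "\<And>n m. n > M \<Longrightarrow> m > M \<Longrightarrow> cls_less (u n) (d m)" unfolding seq_less_def by blast
    hence "seq_less u (c (Suc M))" unfolding cd seq_less_def by auto
    thus "\<exists>k. seq_less u (c k)" by blast
  qed
qed

lemma seq_lim_dec: assumes c: "\<And>j. c j \<in> {(\<lambda>_. d) | d. d \<in> hclasses}" and dec: "\<And>j. seq_less (c (Suc j)) (c j)"
  shows "\<exists>\<sigma>\<in>seqA. (\<forall>k. \<not> seq_less (c k) \<sigma>) \<and> (\<forall>u\<in>seqA. seq_less \<sigma> u \<longrightarrow> (\<exists>k. seq_less (c k) u))"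
proof -
  define d where "d j = c j 0" for j
  have cd: "c j = (\<lambda>_. d j)" for j using c[of j] d_def by auto
  have dh: "d j \<in> hclasses" for j using c[of j] d_def by auto
  have dl: "cls_less (d (Suc j)) (d j)" for j using dec[of j] unfolding cd seq_less_def by auto
  have dle: "i \<le> j \<Longrightarrow> cls_le (d j) (d i)" for i j
    by (rule cls_chain'[OF dh]) (use dl cls_less_def in auto)
  have dS: "d \<in> seqA" unfolding seqA_def using dh dle by blast
  show ?thesis
  proof (intro bexI[OF _ dS] conjI allI ballI impI)
    fix k show "\<not> seq_less (c k) d"
    proof
      assume "seq_less (c k) d"
      then obtain M where "\<And>n. n > M \<Longrightarrow> cls_less (d k) (d n)" unfolding seq_less_def cd by blast
      hence "cls_less (d k) (d (max (Suc M) k))" by simp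
      thus False using dle[of k "max (Suc M) k"] dh cls_less_iff by auto
    qed
  next
    fix u assume "u \<in> seqA" "seq_less d u"
    then obtain M where "\<And>n m. n > M \<Longrightarrow> m > M \<Longrightarrow> cls_less (d n) (u m)" unfolding seq_less_def by blast
    hence "seq_less (c (Suc M)) u" unfolding cd seq_less_def by auto
    thus "\<exists>k. seq_less (c k) u" by blast
  qed
qed


definition cl :: "(nat \<Rightarrow> 'a::linordered_field set) \<Rightarrow> (nat \<Rightarrow> 'a set) set" where
  "cl s = {t \<in> seqA. seq_equiv s t}"

lemma Rset_cl: "Rset = cl ` seqA"
  unfolding Rset_def cl_def by simp

lemma seq_asym: "s \<in> seqA \<Longrightarrow> t \<in> seqA \<Longrightarrow> seq_less s t \<Longrightarrow> \<not> seq_less t s"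
  using seq_trans seq_irrefl by blast

lemma cl_self: "s \<in> seqA \<Longrightarrow> s \<in> cl s"
  unfolding cl_def seq_equiv_def using seq_irrefl by auto

lemma R_le_cl: assumes s: "s \<in> seqA" and t: "t \<in> seqA"
  shows "R_le (cl s) (cl t) \<longleftrightarrow> \<not> seq_less t s"
proof
  assume "R_le (cl s) (cl t)"
  hence "seq_less s t \<or> seq_equiv s t" unfolding R_le_def using cl_self s t by blast
  thus "\<not> seq_less t s" using seq_asym s t unfolding seq_equiv_def by blast
next
  assume nts: "\<not> seq_less t s"
  show "R_le (cl s) (cl t)" unfolding R_le_def
  proof (intro ballI)
    fix s' t' assume s': "s' \<in> cl s" and t': "t' \<in> cl t"
    hence s'A: "s' \<in> seqA" and t'A: "t' \<in> seqA" and e1: "seq_equiv s s'" and e2: "seq_equiv t t'"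
      unfolding cl_def by auto
    have "\<not> seq_less t' s'"
    proof
      assume "seq_less t' s'"
      hence "seq_less t' t \<or> seq_less t s'" using seq_nt t'A t s'A by blast
      hence "seq_less t s'" using e2 unfolding seq_equiv_def by blast
      hence "seq_less t s \<or> seq_less s s'" using seq_nt t s s'A by blast
      thus False using nts e1 unfolding seq_equiv_def by blast
    qed
    thus "seq_less s' t' \<or> seq_equiv s' t'" unfolding seq_equiv_def by blast
  qed
qed

lemma R_sup_of:
  assumes r: "\<And>k. r k \<in> seqA" "\<And>k. Xs k = cl (r k)" and \<sigma>: "\<sigma> \<in> seqA"
    and ub: "\<forall>k. \<not> seq_less \<sigma> (r k)"
    and least: "\<forall>u\<in>seqA. (\<forall>k. \<not> seq_less u (r k)) \<longrightarrow> \<not> seq_less u \<sigma>"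
  shows "R_is_sup Xs (cl \<sigma>)"
  unfolding R_is_sup_def Rset_cl
proof (intro conjI allI ballI impI)
  show "cl \<sigma> \<in> cl ` seqA" using \<sigma> by blast
  fix k show "R_le (Xs k) (cl \<sigma>)" using R_le_cl[OF r(1) \<sigma>] ub r(2) by simp
next
  fix U assume "U \<in> cl ` seqA" and h: "\<forall>k. R_le (Xs k) U"
  then obtain u where u: "u \<in> seqA" "U = cl u" by blast
  have "\<forall>k. \<not> seq_less u (r k)" using h R_le_cl[OF r(1) u(1)] r(2) u(2) by simp
  thus "R_le (cl \<sigma>) U" using least u R_le_cl[OF \<sigma> u(1)] by simp
qed

lemma R_inf_of:
  assumes r: "\<And>k. r k \<in> seqA" "\<And>k. Xs k = cl (r k)" and \<sigma>: "\<sigma> \<in> seqA"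
    and lb: "\<forall>k. \<not> seq_less (r k) \<sigma>"
    and greatest: "\<forall>u\<in>seqA. (\<forall>k. \<not> seq_less (r k) u) \<longrightarrow> \<not> seq_less \<sigma> u"
  shows "R_is_inf Xs (cl \<sigma>)"
  unfolding R_is_inf_def Rset_cl
proof (intro conjI allI ballI impI)
  show "cl \<sigma> \<in> cl ` seqA" using \<sigma> by blast
  fix k show "R_le (cl \<sigma>) (Xs k)" using R_le_cl[OF \<sigma> r(1)] lb r(2) by simp
next
  fix U assume "U \<in> cl ` seqA" and h: "\<forall>k. R_le U (Xs k)"
  then obtain u where u: "u \<in> seqA" "U = cl u" by blast
  have "\<forall>k. \<not> seq_less (r k) u" using h R_le_cl[OF u(1) r(1)] r(2) u(2) by simp
  thus "R_le U (cl \<sigma>)" using greatest u R_le_cl[OF u(1) \<sigma>] by simp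
qed

theorem mainTheorem3:
  fixes emb :: "real \<Rightarrow> 'a::linordered_field"
    and J :: "(nat \<Rightarrow> real) \<Rightarrow> 'a"
    and Xs :: "nat \<Rightarrow> (nat \<Rightarrow> 'a set) set"
  assumes "hyper_structure emb J"
    and "R_mono_seq Xs"
  shows "(\<exists>S. R_is_sup Xs S) \<and> (\<exists>I. R_is_inf Xs I)"
proof -
  have "\<forall>k. \<exists>s. s \<in> seqA \<and> Xs k = cl s" using assms(2) unfolding R_mono_seq_def Rset_cl by blast
  then obtain r where r: "\<And>k. r k \<in> seqA" "\<And>k. Xs k = cl (r k)" by metis
  let ?K = "{(\<lambda>_. d) | d. d \<in> hclasses} :: (nat \<Rightarrow> 'a set) set"
  have KS: "?K \<subseteq> seqA" using const_seqA by blast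
  from assms(2) consider (inc) "\<forall>i j. i \<le> j \<longrightarrow> R_le (Xs i) (Xs j)" | (dec) "\<forall>i j. i \<le> j \<longrightarrow> R_le (Xs j) (Xs i)"
    unfolding R_mono_seq_def by blast
  thus ?thesis
  proof cases
    case inc
    hence mono: "\<And>i j. i \<le> j \<Longrightarrow> \<not> seq_less (r j) (r i)" using R_le_cl r by metis
    obtain \<sigma> where "\<sigma> \<in> seqA" "\<forall>k. \<not> seq_less \<sigma> (r k)"
        "\<forall>u\<in>seqA. (\<forall>k. \<not> seq_less u (r k)) \<longrightarrow> \<not> seq_less u \<sigma>"
    proof -
      have "\<exists>\<sigma>\<in>seqA. (\<forall>k. \<not> seq_less \<sigma> (r k)) \<and>
              (\<forall>u\<in>seqA. (\<forall>k. \<not> seq_less u (r k)) \<longrightarrow> \<not> seq_less u \<sigma>)"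
      proof (rule abstract_sup[of seqA seq_less ?K r])
        show "\<And>s. \<not> seq_less s s" by (rule seq_irrefl)
        show "\<And>s t u. s \<in> seqA \<Longrightarrow> t \<in> seqA \<Longrightarrow> u \<in> seqA \<Longrightarrow> seq_less s t \<Longrightarrow> seq_less t u \<Longrightarrow> seq_less s u"
          using seq_trans by blast
        show "\<And>s t u. s \<in> seqA \<Longrightarrow> t \<in> seqA \<Longrightarrow> u \<in> seqA \<Longrightarrow> seq_less s u \<Longrightarrow> seq_less s t \<or> seq_less t u"
          using seq_nt by blast
        show "?K \<subseteq> seqA" by (rule KS)
        show "\<And>s t u. s \<in> seqA \<Longrightarrow> t \<in> seqA \<Longrightarrow> u \<in> seqA \<Longrightarrow> seq_less s t \<Longrightarrow> seq_less t u \<Longrightarrow> \<exists>c\<in>?K. seq_less s c \<and> seq_less c u"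
          by (rule seq_btw)
        show "\<And>c. (\<And>j. c j \<in> ?K) \<Longrightarrow> (\<And>j. seq_less (c j) (c (Suc j))) \<Longrightarrow>
              \<exists>\<sigma>\<in>seqA. (\<forall>k. \<not> seq_less \<sigma> (c k)) \<and> (\<forall>u\<in>seqA. seq_less u \<sigma> \<longrightarrow> (\<exists>k. seq_less u (c k)))"
          by (rule seq_lim_inc)
        show "\<And>k. r k \<in> seqA" by (rule r(1))
        show "\<And>i j. i \<le> j \<Longrightarrow> \<not> seq_less (r j) (r i)" by (rule mono)
      qed
      thus ?thesis using that by blast
    qed
    hence "R_is_sup Xs (cl \<sigma>)" using R_sup_of r by blast
    moreover have "R_is_inf Xs (cl (r 0))"
      by (rule R_inf_of[OF r r(1)]) (use mono in auto)
    ultimately show ?thesis by blast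
  next
    case dec
    hence mono: "\<And>i j. i \<le> j \<Longrightarrow> \<not> seq_less (r i) (r j)" using R_le_cl r by metis
    obtain \<sigma> where "\<sigma> \<in> seqA" "\<forall>k. \<not> seq_less (r k) \<sigma>"
        "\<forall>u\<in>seqA. (\<forall>k. \<not> seq_less (r k) u) \<longrightarrow> \<not> seq_less \<sigma> u"
    proof -
      have "\<exists>\<sigma>\<in>seqA. (\<forall>k. \<not> (\<lambda>a b. seq_less b a) \<sigma> (r k)) \<and>
              (\<forall>u\<in>seqA. (\<forall>k. \<not> (\<lambda>a b. seq_less b a) u (r k)) \<longrightarrow> \<not> (\<lambda>a b. seq_less b a) u \<sigma>)"
      proof (rule abstract_sup[of seqA "\<lambda>a b. seq_less b a" ?K r])
        show "\<And>s. \<not> seq_less s s" by (rule seq_irrefl)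
        show "\<And>s t u. s \<in> seqA \<Longrightarrow> t \<in> seqA \<Longrightarrow> u \<in> seqA \<Longrightarrow> seq_less t s \<Longrightarrow> seq_less u t \<Longrightarrow> seq_less u s"
          using seq_trans by blast
        show "\<And>s t u. s \<in> seqA \<Longrightarrow> t \<in> seqA \<Longrightarrow> u \<in> seqA \<Longrightarrow> seq_less u s \<Longrightarrow> seq_less t s \<or> seq_less u t"
          using seq_nt by blast
        show "?K \<subseteq> seqA" by (rule KS)
        show "\<And>s t u. s \<in> seqA \<Longrightarrow> t \<in> seqA \<Longrightarrow> u \<in> seqA \<Longrightarrow> seq_less t s \<Longrightarrow> seq_less u t \<Longrightarrow> \<exists>c\<in>?K. seq_less c s \<and> seq_less u c"
        proof -
          fix s t u :: "nat \<Rightarrow> 'a set" assume "s \<in> seqA" "t \<in> seqA" "u \<in> seqA" "seq_less t s" "seq_less u t"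
          thus "\<exists>c\<in>?K. seq_less c s \<and> seq_less u c" using seq_btw[of u t s] by blast
        qed
        show "\<And>c. (\<And>j. c j \<in> ?K) \<Longrightarrow> (\<And>j. seq_less (c (Suc j)) (c j)) \<Longrightarrow>
              \<exists>\<sigma>\<in>seqA. (\<forall>k. \<not> seq_less (c k) \<sigma>) \<and> (\<forall>u\<in>seqA. seq_less \<sigma> u \<longrightarrow> (\<exists>k. seq_less (c k) u))"
          by (rule seq_lim_dec)
        show "\<And>k. r k \<in> seqA" by (rule r(1))
        show "\<And>i j. i \<le> j \<Longrightarrow> \<not> seq_less (r i) (r j)" by (rule mono)
      qed
      thus ?thesis using that by blast
    qed
    hence "R_is_inf Xs (cl \<sigma>)" using R_inf_of r by blast
    moreover have "R_is_sup Xs (cl (r 0))"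
      by (rule R_sup_of[OF r r(1)]) (use mono in auto)
    ultimately show ?thesis by blast
  qed
qed

end
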